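(* Let $G$ be a finitely generated group acting on a set $X$. Then the following are equivalent: (1) the action $G\curvearrowright X$ is amenable; (2) for every configuration pair $(\mathfrak{g},\mathcal{E})$ for this action, the system of configuration equations $\mathrm{Eq}(\mathfrak{g},\mathcal{E};X)$ has a normalized solution.
   Context: An action $G\curvearrowright X$ is amenable if there is a finitely additive measure $\mu$ on all subsets of $X$ with values in $[0,\infty]$, with $\mu(gE)=\mu(E)$ for all $E\subseteq X$, $g\in G$, and $\mu(X)=1$. A configuration pair $(\mathfrak{g},\mathcal{E})$ consists of an ordered tuple $\mathfrak{g}=(g_1,\dots,g_n)$ of elements of $G$ and a finite partition $\mathcal{E}=\{E_1,\dots,E_m\}$ of $X$. A configuration related to $(\mathfrak{g},\mathcal{E})$ is a tuple $C=(C_0,C_1,\dots,C_n)\in\{1,\dots,m\}^{n+1}$ for which there exists $x\in E_{C_0}$ with $g_i\cdot x\in E_{C_i}$ for all $i=1,\dots,n$; the set of these is $\mathrm{Con}(\mathfrak{g},\mathcal{E};X)$. The configuration equations $\mathrm{Eq}(\mathfrak{g},\mathcal{E};X)$ are the linear equations in unknowns $(f_C)_{C\in \mathrm{Con}(\mathfrak{g},\mathcal{E};X)}$: for every $j\in\{1,\dots,n\}$ and $i\in\{1,\dots,m\}$, $\sum\{f_C: C_j=i\}=\sum\{f_C: C_0=i\}$. A normalized solution is a solution with all $f_C\ge 0$ and $\sum_C f_C=1$. *)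

theory Defs
  imports "HOL-Algebra.Group_Action" "HOL-Algebra.Generated_Groups" "HOL-Library.Extended_Nonnegative_Real"
begin

definition finitely_generated_group :: "('g, 'b) monoid_scheme \<Rightarrow> bool" where
  "finitely_generated_group G \<longleftrightarrow>
     (\<exists>S. finite S \<and> S \<subseteq> carrier G \<and> generate G S = carrier G)"

definition amenable_action ::
  "('g, 'b) monoid_scheme \<Rightarrow> 'x set \<Rightarrow> ('g \<Rightarrow> 'x \<Rightarrow> 'x) \<Rightarrow> bool" where
  "amenable_action G X \<phi> \<longleftrightarrow>
     (\<exists>\<mu> :: 'x set \<Rightarrow> ennreal.
        \<mu> {} = 0 \<and>
        (\<forall>A B. A \<subseteq> X \<longrightarrow> B \<subseteq> X \<longrightarrow> A \<inter> B = {} \<longrightarrow> \<mu> (A \<union> B) = \<mu> A + \<mu> B) \<and>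
        (\<forall>E g. E \<subseteq> X \<longrightarrow> g \<in> carrier G \<longrightarrow> \<mu> (\<phi> g ` E) = \<mu> E) \<and>
        \<mu> X = 1)"

definition indexed_partition :: "'x set \<Rightarrow> 'x set list \<Rightarrow> bool" where
  "indexed_partition X Es \<longleftrightarrow>
     (\<forall>i<length Es. Es ! i \<noteq> {} \<and> Es ! i \<subseteq> X) \<and>
     (\<forall>i<length Es. \<forall>j<length Es. i \<noteq> j \<longrightarrow> Es ! i \<inter> Es ! j = {}) \<and>
     (\<Union>i<length Es. Es ! i) = X"

definition configuration_pair ::
  "('g, 'b) monoid_scheme \<Rightarrow> 'x set \<Rightarrow> 'g list \<Rightarrow> 'x set list \<Rightarrow> bool" where
  "configuration_pair G X gs Es \<longleftrightarrow> set gs \<subseteq> carrier G \<and> indexed_partition X Es"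

definition Con ::
  "('g \<Rightarrow> 'x \<Rightarrow> 'x) \<Rightarrow> 'g list \<Rightarrow> 'x set list \<Rightarrow> 'x set \<Rightarrow> nat list set" where
  "Con \<phi> gs Es X =
     {C. length C = Suc (length gs) \<and> (\<forall>k<length C. C ! k < length Es) \<and>
         (\<exists>x\<in>X. x \<in> Es ! (C ! 0) \<and>
            (\<forall>i<length gs. \<phi> (gs ! i) x \<in> Es ! (C ! Suc i)))}"

definition solves_config_eqs ::
  "('g \<Rightarrow> 'x \<Rightarrow> 'x) \<Rightarrow> 'g list \<Rightarrow> 'x set list \<Rightarrow> 'x set \<Rightarrow> (nat list \<Rightarrow> real) \<Rightarrow> bool" where
  "solves_config_eqs \<phi> gs Es X f \<longleftrightarrow>
     (\<forall>j\<in>{1..length gs}. \<forall>i<length Es.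
        (\<Sum>C\<in>{C\<in>Con \<phi> gs Es X. C ! j = i}. f C) = (\<Sum>C\<in>{C\<in>Con \<phi> gs Es X. C ! 0 = i}. f C))"

definition has_normalized_solution ::
  "('g \<Rightarrow> 'x \<Rightarrow> 'x) \<Rightarrow> 'g list \<Rightarrow> 'x set list \<Rightarrow> 'x set \<Rightarrow> bool" where
  "has_normalized_solution \<phi> gs Es X \<longleftrightarrow>
     (\<exists>f. solves_config_eqs \<phi> gs Es X f \<and>
          (\<forall>C\<in>Con \<phi> gs Es X. f C \<ge> 0) \<and>
          (\<Sum>C\<in>Con \<phi> gs Es X. f C) = 1)"

end

theory Submission
  imports Defs "HOL-Analysis.Analysis"
begin


lemma partition_refining:
  fixes X :: "'x set" and Ls :: "'x set list"
  shows "\<exists>Es. indexed_partition X Es \<and> (\<forall>i<length Es. \<forall>L\<in>set Ls. Es!i \<subseteq> L \<or> Es!i \<inter> L = {})"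
proof -
  define sig where "sig x = {L\<in>set Ls. x \<in> L}" for x
  define cls where "cls x = {y\<in>X. sig y = sig x}" for x
  define F where "F S = {y\<in>X. sig y = S}" for S
  have "cls ` X \<subseteq> F ` Pow (set Ls)" unfolding cls_def F_def sig_def by auto
  hence "finite (cls ` X)" by (rule finite_subset) auto
  then obtain Es where d: "distinct Es" and s: "set Es = cls ` X" using finite_distinct_list by blast
  have eq: "cls x = cls z" if "z \<in> cls x" for x z using that unfolding cls_def by auto
  have "indexed_partition X Es"
    unfolding indexed_partition_def
  proof (intro conjI allI impI)
    fix i assume "i < length Es"
    then have "Es!i \<in> cls ` X" using s nth_mem by blast
    then show "Es ! i \<noteq> {}" "Es!i \<subseteq> X" unfolding cls_def by auto
  next
    fix i j assume ij: "i < length Es" "j < length Es" "i \<noteq> j"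
    then have ne: "Es!i \<noteq> Es!j" using d by (simp add: nth_eq_iff_index_eq)
    obtain x where x: "Es!i = cls x" using ij s nth_mem by blast
    obtain y where y: "Es!j = cls y" using ij s nth_mem by (metis imageE)
    show "Es ! i \<inter> Es ! j = {}"
    proof (rule ccontr)
      assume "Es ! i \<inter> Es ! j \<noteq> {}"
      then obtain z where "z \<in> cls x" "z \<in> cls y" using x y by auto
      then have "cls x = cls y" using eq by metis
      then show False using ne x y by simp
    qed
  next
    have "(\<Union>i<length Es. Es ! i) = \<Union>(set Es)" by (auto simp: set_conv_nth)
    also have "\<dots> = X" using s unfolding cls_def by auto
    finally show "(\<Union>i<length Es. Es ! i) = X" .
  qed
  moreover have "\<forall>i<length Es. \<forall>L\<in>set Ls. Es!i \<subseteq> L \<or> Es!i \<inter> L = {}"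
  proof (intro allI impI ballI)
    fix i L assume "i < length Es" "L \<in> set Ls"
    then obtain x where x: "Es!i = cls x" using s nth_mem by (metis imageE)
    show "Es!i \<subseteq> L \<or> Es!i \<inter> L = {}"
      unfolding x cls_def sig_def using \<open>L \<in> set Ls\<close> by blast
  qed
  ultimately show ?thesis by blast
qed

lemma finite_Con: "finite (Con \<phi> gs Es X)"
proof -
  have "Con \<phi> gs Es X \<subseteq> {xs. set xs \<subseteq> {..<length Es} \<and> length xs = Suc (length gs)}"
    unfolding Con_def by (auto simp: in_set_conv_nth)
  then show ?thesis by (rule finite_subset) (simp add: finite_lists_length_eq)
qed

lemma regroup:
  fixes m :: nat
  assumes "finite A" "\<And>C. C \<in> A \<Longrightarrow> c C < m"
  shows "(\<Sum>C\<in>A. if Q (c C) then f C else 0) = (\<Sum>i\<in>{i. i<m \<and> Q i}. \<Sum>C\<in>{C\<in>A. c C = i}. f C)"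
proof -
  have "(\<Sum>C\<in>A. if Q (c C) then f C else 0) = (\<Sum>C\<in>{C\<in>A. Q (c C)}. f C)"
    by (simp add: sum.inter_filter assms)
  also have "\<dots> = (\<Sum>i\<in>{i. i<m \<and> Q i}. \<Sum>C\<in>{C\<in>{C\<in>A. Q (c C)}. c C = i}. f C)"
  proof (rule sum.group[symmetric])
    show "finite {i. i < m \<and> Q i}" by (rule finite_subset[of _ "{..<m}"]) auto
  qed (use assms in auto)
  also have "\<dots> = (\<Sum>i\<in>{i. i<m \<and> Q i}. \<Sum>C\<in>{C\<in>A. c C = i}. f C)"
    by (rule sum.cong) (auto intro: sum.cong)
  finally show ?thesis .
qed

lemma dirac_comb:
  fixes w :: "'s \<Rightarrow> real" and X :: "'x set" and p :: "'s \<Rightarrow> 'x"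
  assumes "finite S" "\<And>s. s \<in> S \<Longrightarrow> w s \<ge> 0" "sum w S = 1" "\<And>s. s \<in> S \<Longrightarrow> p s \<in> X"
  defines "\<mu> \<equiv> \<lambda>B. \<Sum>s\<in>S. if p s \<in> B then w s else 0"
  shows "\<forall>A. 0 \<le> \<mu> A \<and> \<mu> A \<le> 1" "\<mu> {} = 0" "\<mu> X = 1"
    "\<And>A B. A \<inter> B = {} \<Longrightarrow> \<mu> (A \<union> B) = \<mu> A + \<mu> B"
proof -
  show "\<forall>A. 0 \<le> \<mu> A \<and> \<mu> A \<le> 1"
  proof
    fix A
    have "\<mu> A \<le> sum w S" unfolding \<mu>_def by (rule sum_mono) (use assms in auto)
    moreover have "0 \<le> \<mu> A" unfolding \<mu>_def by (rule sum_nonneg) (use assms in auto)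
    ultimately show "0 \<le> \<mu> A \<and> \<mu> A \<le> 1" using assms by simp
  qed
  show "\<mu> {} = 0" unfolding \<mu>_def by simp
  show "\<mu> X = 1" unfolding \<mu>_def using assms by (simp cong: sum.cong)
  fix A B :: "'x set" assume "A \<inter> B = {}"
  then show "\<mu> (A \<union> B) = \<mu> A + \<mu> B" unfolding \<mu>_def
    by (auto simp: sum.distrib[symmetric] intro!: sum.cong)
qed



lemma finite_invariant:
  fixes G :: "('g, 'b) monoid_scheme" and X :: "'x set" and \<phi> :: "'g \<Rightarrow> 'x \<Rightarrow> 'x"
  assumes ga: "group_action G X \<phi>"
  and sol: "\<forall>gs Es. configuration_pair G X gs Es \<longrightarrow> has_normalized_solution \<phi> gs Es X"
  and P: "set ps \<subseteq> {(E,g). E \<subseteq> X \<and> g \<in> carrier G}"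
  shows "\<exists>\<mu>::'x set \<Rightarrow> real. (\<forall>A. 0 \<le> \<mu> A \<and> \<mu> A \<le> 1) \<and> \<mu> {} = 0 \<and> \<mu> X = 1 \<and>
     (\<forall>A B. A \<inter> B = {} \<longrightarrow> \<mu> (A \<union> B) = \<mu> A + \<mu> B) \<and> (\<forall>(E,g)\<in>set ps. \<mu> (\<phi> g ` E) = \<mu> E)"
proof -
  interpret group_action G X \<phi> by fact
  interpret group G using group_hom group_hom.axioms(1) by auto
  obtain Es where part: "indexed_partition X Es"
    and refine: "\<forall>i<length Es. \<forall>L\<in>set (map fst ps). Es!i \<subseteq> L \<or> Es!i \<inter> L = {}"
    using partition_refining by blast
  define gs where "gs = map (\<lambda>p. inv\<^bsub>G\<^esub> (snd p)) ps"
  have "configuration_pair G X gs Es"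
    unfolding configuration_pair_def gs_def using part P by auto
  with sol obtain f where fsol: "solves_config_eqs \<phi> gs Es X f"
    and fpos: "\<forall>C\<in>Con \<phi> gs Es X. f C \<ge> 0" and fsum: "(\<Sum>C\<in>Con \<phi> gs Es X. f C) = 1"
    unfolding has_normalized_solution_def by blast
  define Cn where "Cn = Con \<phi> gs Es X"
  define xC where "xC C = (SOME x. x\<in>X \<and> x\<in>Es!(C!0) \<and> (\<forall>i<length gs. \<phi>(gs!i) x \<in> Es!(C!Suc i)))" for C
  have xC: "xC C \<in> X \<and> xC C \<in> Es!(C!0) \<and> (\<forall>i<length gs. \<phi>(gs!i) (xC C) \<in> Es!(C!Suc i))"
    if "C \<in> Cn" for C
    unfolding xC_def by (rule someI_ex) (use that in \<open>auto simp: Cn_def Con_def\<close>)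
  have Clt: "C!k < length Es" if "C \<in> Cn" "k \<le> length gs" for C k
    using that unfolding Cn_def Con_def by auto
  define \<mu> where "\<mu> B = (\<Sum>C\<in>Cn. if xC C \<in> B then f C else 0)" for B
  have fin: "finite Cn" unfolding Cn_def by (rule finite_Con)
  have fpos': "\<And>C. C \<in> Cn \<Longrightarrow> f C \<ge> 0" and fsum': "sum f Cn = 1"
    using fpos fsum unfolding Cn_def by auto
  have d1: "\<forall>A. 0 \<le> \<mu> A \<and> \<mu> A \<le> 1" "\<mu> {} = 0" "\<mu> X = 1"
    "\<And>A B. A \<inter> B = {} \<Longrightarrow> \<mu> (A \<union> B) = \<mu> A + \<mu> B"
  proof -
    have xX: "\<And>C. C \<in> Cn \<Longrightarrow> xC C \<in> X" using xC by blast
    note dd = dirac_comb[where S=Cn and w=f and X=X and p=xC, OF fin fpos' fsum' xX]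
    show "\<forall>A. 0 \<le> \<mu> A \<and> \<mu> A \<le> 1" unfolding \<mu>_def by (rule dd(1))
    show "\<mu> {} = 0" unfolding \<mu>_def by (rule dd(2))
    show "\<mu> X = 1" unfolding \<mu>_def by (rule dd(3))
    show "\<And>A B. A \<inter> B = {} \<Longrightarrow> \<mu> (A \<union> B) = \<mu> A + \<mu> B" unfolding \<mu>_def by (rule dd(4))
  qed
  have block: "y \<in> E \<longleftrightarrow> Es!i \<subseteq> E" if "i < length Es" "y \<in> Es!i" "E \<in> fst ` set ps" for y i E
  proof -
    have "Es!i \<subseteq> E \<or> Es!i \<inter> E = {}" using refine that(1,3) by force
    then show ?thesis using that(2) by blast
  qed
  have inv: "\<mu> (\<phi> g ` E) = \<mu> E" if Ep: "(E,g) \<in> set ps" for E g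
  proof -
    obtain k where k: "k < length ps" "ps!k = (E,g)" using Ep unfolding in_set_conv_nth by blast
    have EX: "E \<subseteq> X" and g: "g \<in> carrier G" using P that by auto
    have Efst: "E \<in> fst ` set ps" using that by force
    have gsk: "gs!k = inv\<^bsub>G\<^esub> g" "k < length gs" using k by (auto simp: gs_def)
    have a: "xC C \<in> \<phi> g ` E \<longleftrightarrow> Es!(C!Suc k) \<subseteq> E" if C: "C \<in> Cn" for C
    proof -
      have x: "xC C \<in> X" using xC[OF C] by simp
      have y: "\<phi> (inv\<^bsub>G\<^esub> g) (xC C) \<in> Es!(C!Suc k)" using xC[OF C] gsk by auto
      have "xC C \<in> \<phi> g ` E \<longleftrightarrow> \<phi> (inv\<^bsub>G\<^esub> g) (xC C) \<in> E"
      proof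
        assume "xC C \<in> \<phi> g ` E"
        then obtain e where "e \<in> E" "xC C = \<phi> g e" by blast
        then show "\<phi> (inv\<^bsub>G\<^esub> g) (xC C) \<in> E" using orbit_sym_aux[OF g, of e] EX by auto
      next
        assume "\<phi> (inv\<^bsub>G\<^esub> g) (xC C) \<in> E"
        moreover have "\<phi> g (\<phi> (inv\<^bsub>G\<^esub> g) (xC C)) = xC C"
          using orbit_sym_aux[of "inv\<^bsub>G\<^esub> g" "xC C"] g x by simp
        ultimately show "xC C \<in> \<phi> g ` E" by (metis image_eqI)
      qed
      also have "\<dots> \<longleftrightarrow> Es!(C!Suc k) \<subseteq> E"
        by (rule block[OF Clt[OF C] y Efst]) (use gsk in simp)
      finally show ?thesis .
    qed
    have b: "xC C \<in> E \<longleftrightarrow> Es!(C!0) \<subseteq> E" if C: "C \<in> Cn" for C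
      by (rule block[OF Clt[OF C] _ Efst]) (use xC[OF C] in auto)
    have "\<mu> (\<phi> g ` E) = (\<Sum>C\<in>Cn. if Es!(C!Suc k) \<subseteq> E then f C else 0)"
      unfolding \<mu>_def by (rule sum.cong) (auto simp: a)
    also have "\<dots> = (\<Sum>i\<in>{i. i<length Es \<and> Es!i \<subseteq> E}. \<Sum>C\<in>{C\<in>Cn. C!Suc k = i}. f C)"
      by (rule regroup[OF fin]) (use Clt gsk in auto)
    also have "\<dots> = (\<Sum>i\<in>{i. i<length Es \<and> Es!i \<subseteq> E}. \<Sum>C\<in>{C\<in>Cn. C!0 = i}. f C)"
    proof (rule sum.cong)
      fix i assume "i \<in> {i. i<length Es \<and> Es!i \<subseteq> E}"
      then show "(\<Sum>C\<in>{C\<in>Cn. C!Suc k = i}. f C) = (\<Sum>C\<in>{C\<in>Cn. C!0 = i}. f C)"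
        using fsol gsk unfolding solves_config_eqs_def Cn_def by auto
    qed simp
    also have "\<dots> = (\<Sum>C\<in>Cn. if Es!(C!0) \<subseteq> E then f C else 0)"
      by (rule regroup[OF fin, symmetric]) (use Clt in auto)
    also have "\<dots> = \<mu> E"
      unfolding \<mu>_def by (rule sum.cong) (auto simp: b)
    finally show ?thesis .
  qed
  show ?thesis using d1 inv by blast
qed



lemma fip_lemma:
  fixes I :: "'i set" and a b c :: "'i \<Rightarrow> 'a set" and r :: "'i \<Rightarrow> real"
  assumes fin: "\<And>J. finite J \<Longrightarrow> J \<subseteq> I \<Longrightarrow> \<exists>\<mu>::'a set \<Rightarrow> real. (\<forall>A. 0 \<le> \<mu> A \<and> \<mu> A \<le> 1) \<and>
      (\<forall>i\<in>J. \<mu> (a i) + \<mu> (b i) = \<mu> (c i) + r i)"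
  shows "\<exists>\<mu>::'a set \<Rightarrow> real. (\<forall>A. 0 \<le> \<mu> A \<and> \<mu> A \<le> 1) \<and> (\<forall>i\<in>I. \<mu> (a i) + \<mu> (b i) = \<mu> (c i) + r i)"
proof -
  let ?K = "PiE UNIV (\<lambda>_::'a set. {0..1::real})"
  let ?f = "\<lambda>i. {\<mu>::'a set \<Rightarrow> real. \<mu> (a i) + \<mu> (b i) = \<mu> (c i) + r i}"
  have cK: "compact ?K"
  proof -
    have "compactin (product_topology (\<lambda>_. euclidean) UNIV) ?K"
      by (simp add: compactin_PiE)
    then show ?thesis by (simp add: euclidean_product_topology)
  qed
  have "?K \<inter> (\<Inter>i\<in>I. ?f i) \<noteq> {}"
  proof (rule compact_imp_fip_image[OF cK])
    fix i assume "i \<in> I"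
    show "closed (?f i)"
      by (intro closed_Collect_eq continuous_intros continuous_on_product_then_coordinatewise continuous_on_id)
  next
    fix J assume "finite J" "J \<subseteq> I"
    from fin[OF this] obtain \<mu> :: "'a set \<Rightarrow> real" where m: "\<forall>A. 0 \<le> \<mu> A \<and> \<mu> A \<le> 1"
      "\<forall>i\<in>J. \<mu> (a i) + \<mu> (b i) = \<mu> (c i) + r i" by blast
    have "\<mu> \<in> ?K \<inter> (\<Inter>i\<in>J. ?f i)" using m by auto
    then show "?K \<inter> (\<Inter>i\<in>J. ?f i) \<noteq> {}" by blast
  qed
  then obtain \<mu> where "\<mu> \<in> ?K \<inter> (\<Inter>i\<in>I. ?f i)" by blast
  then show ?thesis by (intro exI[of _ \<mu>]) auto
qed

lemma two_imp_one:
  fixes G :: "('g, 'b) monoid_scheme" and X :: "'x set" and \<phi> :: "'g \<Rightarrow> 'x \<Rightarrow> 'x"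
  assumes ga: "group_action G X \<phi>"
  and sol: "\<forall>gs Es. configuration_pair G X gs Es \<longrightarrow> has_normalized_solution \<phi> gs Es X"
  shows "amenable_action G X \<phi>"
proof -
  define a where "a i = (case i of None \<Rightarrow> X | Some (Inl (A,B)) \<Rightarrow> A | Some (Inr (E,g)) \<Rightarrow> \<phi> g ` E)"
    for i :: "(('x set \<times> 'x set) + ('x set \<times> 'g)) option"
  define b where "b i = (case i of None \<Rightarrow> {} | Some (Inl (A,B)) \<Rightarrow> B | Some (Inr (E,g)) \<Rightarrow> {})"
    for i :: "(('x set \<times> 'x set) + ('x set \<times> 'g)) option"
  define c where "c i = (case i of None \<Rightarrow> {} | Some (Inl (A,B)) \<Rightarrow> A \<union> B | Some (Inr (E,g)) \<Rightarrow> E)"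
    for i :: "(('x set \<times> 'x set) + ('x set \<times> 'g)) option"
  define r where "r i = (case i of None \<Rightarrow> 1 | Some _ \<Rightarrow> (0::real))"
    for i :: "(('x set \<times> 'x set) + ('x set \<times> 'g)) option"
  define I where "I = insert None (Some ` (Inl ` {(A,B). A \<subseteq> X \<and> B \<subseteq> X \<and> A \<inter> B = {}}
      \<union> Inr ` {(E,g). E \<subseteq> X \<and> g \<in> carrier G}))"
  have "\<exists>\<mu>::'x set \<Rightarrow> real. (\<forall>A. 0 \<le> \<mu> A \<and> \<mu> A \<le> 1) \<and> (\<forall>i\<in>I. \<mu> (a i) + \<mu> (b i) = \<mu> (c i) + r i)"
  proof (rule fip_lemma)
    fix J assume J: "finite J" "J \<subseteq> I"
    define P where "P = (Some \<circ> Inr) -` J"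
    have "finite P" unfolding P_def by (rule finite_vimageI) (use J in \<open>auto simp: inj_def\<close>)
    then obtain ps where ps: "set ps = P" using finite_list by blast
    have "set ps \<subseteq> {(E,g). E \<subseteq> X \<and> g \<in> carrier G}" using J unfolding ps P_def I_def by auto
    from finite_invariant[OF ga sol this] obtain \<mu> :: "'x set \<Rightarrow> real" where
      m: "\<forall>A. 0 \<le> \<mu> A \<and> \<mu> A \<le> 1" "\<mu> {} = 0" "\<mu> X = 1"
      "\<forall>A B. A \<inter> B = {} \<longrightarrow> \<mu> (A \<union> B) = \<mu> A + \<mu> B" "\<forall>(E,g)\<in>set ps. \<mu> (\<phi> g ` E) = \<mu> E"
      by blast
    have "\<forall>i\<in>J. \<mu> (a i) + \<mu> (b i) = \<mu> (c i) + r i"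
    proof
      fix i assume i: "i \<in> J"
      show "\<mu> (a i) + \<mu> (b i) = \<mu> (c i) + r i"
      proof (cases i)
        case None then show ?thesis using m by (simp add: a_def b_def c_def r_def)
      next
        case (Some s)
        show ?thesis
        proof (cases s)
          case (Inl p)
          obtain A B where p: "p = (A,B)" by (cases p)
          have "A \<inter> B = {}" using i J unfolding Some Inl p I_def by auto
          then show ?thesis using m unfolding Some Inl p a_def b_def c_def r_def by simp
        next
          case (Inr p)
          obtain E g where p: "p = (E,g)" by (cases p)
          have "(E,g) \<in> set ps" using i unfolding ps P_def Some Inr p by simp
          then show ?thesis using m unfolding Some Inr p a_def b_def c_def r_def by auto
        qed
      qed
    qed
    with m(1) show "\<exists>\<mu>::'x set \<Rightarrow> real. (\<forall>A. 0 \<le> \<mu> A \<and> \<mu> A \<le> 1) \<and> (\<forall>i\<in>J. \<mu> (a i) + \<mu> (b i) = \<mu> (c i) + r i)"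
      by blast
  qed
  then obtain \<mu> :: "'x set \<Rightarrow> real" where m: "\<forall>A. 0 \<le> \<mu> A \<and> \<mu> A \<le> 1"
    "\<forall>i\<in>I. \<mu> (a i) + \<mu> (b i) = \<mu> (c i) + r i" by blast
  have m0: "\<mu> {} = 0" using m(2)[rule_format, of "Some (Inl ({},{}))"]
    by (simp add: I_def a_def b_def c_def r_def)
  have mX: "\<mu> X = 1" using m(2)[rule_format, of None] by (simp add: I_def a_def b_def c_def r_def)
  have madd: "\<mu> (A \<union> B) = \<mu> A + \<mu> B" if "A \<subseteq> X" "B \<subseteq> X" "A \<inter> B = {}" for A B
    using m(2)[rule_format, of "Some (Inl (A,B))"] that by (simp add: I_def a_def b_def c_def r_def)
  have minv: "\<mu> (\<phi> g ` E) = \<mu> E" if "E \<subseteq> X" "g \<in> carrier G" for E g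
    using m(2)[rule_format, of "Some (Inr (E,g))"] that m0 by (simp add: I_def a_def b_def c_def r_def)
  show ?thesis unfolding amenable_action_def
  proof (intro exI[of _ "\<lambda>A. ennreal (\<mu> A)"] conjI allI impI)
    show "ennreal (\<mu> {}) = 0" using m0 by simp
    show "ennreal (\<mu> X) = 1" using mX by simp
    fix A B assume "A \<subseteq> X" "B \<subseteq> X" "A \<inter> B = {}"
    then show "ennreal (\<mu> (A \<union> B)) = ennreal (\<mu> A) + ennreal (\<mu> B)"
      using madd m(1) by (simp add: ennreal_plus)
  next
    fix E g assume "E \<subseteq> X" "g \<in> carrier G"
    then show "ennreal (\<mu> (\<phi> g ` E)) = ennreal (\<mu> E)" using minv by simp
  qed
qed



lemma fin_add:
  fixes \<mu> :: "'x set \<Rightarrow> ennreal" and F :: "'s \<Rightarrow> 'x set"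
  assumes add: "\<forall>A B. A \<subseteq> X \<longrightarrow> B \<subseteq> X \<longrightarrow> A \<inter> B = {} \<longrightarrow> \<mu> (A \<union> B) = \<mu> A + \<mu> B"
    and e: "\<mu> {} = 0"
  shows "finite S \<Longrightarrow> (\<forall>s\<in>S. F s \<subseteq> X) \<Longrightarrow> disjoint_family_on F S \<Longrightarrow>
    \<mu> (\<Union>s\<in>S. F s) = (\<Sum>s\<in>S. \<mu> (F s))"
proof (induction S rule: finite_induct)
  case empty
  then show ?case using e by simp
next
  case (insert x S)
  have d: "disjoint_family_on F S" using insert.prems(2) disjoint_family_on_mono by blast
  have "F x \<inter> (\<Union>s\<in>S. F s) = {}"
    using insert.prems(2) insert.hyps(2) unfolding disjoint_family_on_def by fastforce
  moreover have "(\<Union>s\<in>S. F s) \<subseteq> X" "F x \<subseteq> X" using insert.prems(1) by auto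
  ultimately have "\<mu> (F x \<union> (\<Union>s\<in>S. F s)) = \<mu> (F x) + \<mu> (\<Union>s\<in>S. F s)"
    using add by blast
  then show ?case using insert d by simp
qed

lemma one_imp_two:
  fixes G :: "('g, 'b) monoid_scheme" and X :: "'x set" and \<phi> :: "'g \<Rightarrow> 'x \<Rightarrow> 'x"
  assumes ga: "group_action G X \<phi>"
  and am: "amenable_action G X \<phi>"
  shows "\<forall>gs Es. configuration_pair G X gs Es \<longrightarrow> has_normalized_solution \<phi> gs Es X"
proof (intro allI impI)
  interpret group_action G X \<phi> by fact
  interpret group G using group_hom group_hom.axioms(1) by auto
  fix gs Es assume cp: "configuration_pair G X gs Es"
  obtain \<mu> :: "'x set \<Rightarrow> ennreal" where m0: "\<mu> {} = 0"
    and madd: "\<forall>A B. A \<subseteq> X \<longrightarrow> B \<subseteq> X \<longrightarrow> A \<inter> B = {} \<longrightarrow> \<mu> (A \<union> B) = \<mu> A + \<mu> B"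
    and minv: "\<forall>E g. E \<subseteq> X \<longrightarrow> g \<in> carrier G \<longrightarrow> \<mu> (\<phi> g ` E) = \<mu> E"
    and mX: "\<mu> X = 1"
    using am unfolding amenable_action_def by blast
  have gsG: "set gs \<subseteq> carrier G" and part: "indexed_partition X Es"
    using cp unfolding configuration_pair_def by auto
  define n where "n = length gs"
  define m where "m = length Es"
  have gsi: "gs!i \<in> carrier G" if "i < n" for i using gsG that unfolding n_def by auto
  have ex1: "\<exists>!i. i < m \<and> y \<in> Es!i" if "y \<in> X" for y
  proof -
    have "y \<in> (\<Union>i<length Es. Es ! i)" using part that unfolding indexed_partition_def by simp
    then obtain i where "i < m" "y \<in> Es!i" unfolding m_def by blast
    moreover have "j = i" if "j < m" "y \<in> Es!j" for j
      using part \<open>i < m\<close> \<open>y \<in> Es!i\<close> that unfolding indexed_partition_def m_def by blast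
    ultimately show ?thesis by blast
  qed
  define idx where "idx y = (THE i. i < m \<and> y \<in> Es!i)" for y
  have idx: "idx y < m \<and> y \<in> Es!(idx y)" if "y \<in> X" for y
    unfolding idx_def by (rule theI'[OF ex1[OF that]])
  have idx_eq: "idx y = i \<longleftrightarrow> y \<in> Es!i" if "y \<in> X" "i < m" for y i
    using idx[OF that(1)] ex1[OF that(1)] that(2) by blast
  define yv where "yv x k = (if k = 0 then x else \<phi> (gs!(k-1)) x)" for x k
  have yvX: "yv x k \<in> X" if "x \<in> X" "k \<le> n" for x k
    using that gsi[of "k-1"] element_image unfolding yv_def by (cases k) auto
  define sig where "sig x = map (\<lambda>k. idx (yv x k)) [0..<Suc n]" for x
  have sig_nth: "sig x ! k = idx (yv x k)" if "k \<le> n" for x k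
    unfolding sig_def using that by (simp del: upt_Suc)
  define Cn where "Cn = Con \<phi> gs Es X"
  define T where "T C = {x\<in>X. x \<in> Es!(C!0) \<and> (\<forall>i<n. \<phi>(gs!i) x \<in> Es!(C!Suc i))}" for C
  have F1: "sig x \<in> Cn \<and> x \<in> T (sig x)" if x: "x \<in> X" for x
  proof -
    have a: "sig x ! k < m \<and> yv x k \<in> Es!(sig x ! k)" if "k \<le> n" for k
      using sig_nth[OF that] idx[OF yvX[OF x that]] by simp
    have l: "length (sig x) = Suc n" unfolding sig_def by simp
    have b: "x \<in> Es ! (sig x ! 0)" using a[of 0] by (simp add: yv_def)
    have c: "\<phi> (gs!i) x \<in> Es!(sig x ! Suc i)" if "i < n" for i
      using a[of "Suc i"] that by (simp add: yv_def)
    show ?thesis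
      unfolding Cn_def Con_def T_def using l a b c x
      by (auto simp: n_def m_def less_Suc_eq_le)
  qed
  have F2: "C = sig x" if C: "C \<in> Cn" and x: "x \<in> T C" for C x
  proof (rule nth_equalityI)
    have l: "length C = Suc n" using C unfolding Cn_def Con_def n_def by simp
    then show "length C = length (sig x)" unfolding sig_def by simp
    fix k assume "k < length C"
    then have k: "k \<le> n" using l by simp
    have xX: "x \<in> X" using x unfolding T_def by simp
    have Ck: "C!k < m" using C k l unfolding Cn_def Con_def m_def by auto
    have "yv x k \<in> Es!(C!k)"
    proof (cases k)
      case 0 then show ?thesis using x unfolding T_def yv_def by simp
    next
      case (Suc i) then show ?thesis using x k unfolding T_def yv_def by simp
    qed
    then have "idx (yv x k) = C!k" using idx_eq[OF yvX[OF xX k] Ck] by simp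
    then show "C ! k = sig x ! k" using sig_nth[OF k] by simp
  qed
  have TX: "T C \<subseteq> X" for C unfolding T_def by auto
  have disj: "disjoint_family_on T Cn"
    unfolding disjoint_family_on_def using F2 by blast
  have finC: "finite Cn" unfolding Cn_def by (rule finite_Con)
  have U: "(\<Union>C\<in>{C\<in>Cn. Q C}. T C) = {x\<in>X. Q (sig x)}" for Q
    using F1 F2 TX by blast
  have mle: "\<mu> A \<le> 1" if "A \<subseteq> X" for A
  proof -
    have "X = A \<union> (X - A)" using that by blast
    then have "\<mu> X = \<mu> A + \<mu> (X - A)" using madd that by (metis Diff_disjoint Diff_subset)
    then show ?thesis using mX by (metis le_iff_add)
  qed
  have mfin: "\<mu> A < (Orderings.top :: ennreal)" if "A \<subseteq> X" for A
    using mle[OF that] by (metis ennreal_one_less_top le_less_trans)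
  define f where "f C = enn2real (\<mu> (T C))" for C
  have sumQ: "(\<Sum>C\<in>{C\<in>Cn. Q C}. f C) = enn2real (\<mu> {x\<in>X. Q (sig x)})" for Q
  proof -
    have "(\<Sum>C\<in>{C\<in>Cn. Q C}. f C) = enn2real (\<Sum>C\<in>{C\<in>Cn. Q C}. \<mu> (T C))"
      unfolding f_def by (subst enn2real_sum) (use mfin TX in auto)
    also have "(\<Sum>C\<in>{C\<in>Cn. Q C}. \<mu> (T C)) = \<mu> (\<Union>C\<in>{C\<in>Cn. Q C}. T C)"
      by (rule fin_add[OF madd m0, symmetric])
        (use finC TX disj in \<open>auto intro: disjoint_family_on_mono\<close>)
    finally show ?thesis unfolding U .
  qed
  show "has_normalized_solution \<phi> gs Es X"
    unfolding has_normalized_solution_def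
  proof (intro exI[of _ f] conjI ballI)
    show "0 \<le> f C" for C unfolding f_def by simp
    have "(\<Sum>C\<in>Cn. f C) = (\<Sum>C\<in>{C\<in>Cn. True}. f C)" by simp
    also have "\<dots> = 1" unfolding sumQ using mX by simp
    finally show "(\<Sum>C\<in>Con \<phi> gs Es X. f C) = 1" unfolding Cn_def .
    show "solves_config_eqs \<phi> gs Es X f"
      unfolding solves_config_eqs_def Cn_def[symmetric]
    proof (intro ballI allI impI)
      fix j i assume j: "j \<in> {1..length gs}" and i: "i < length Es"
      then have jn: "j \<le> n" "0 < j" unfolding n_def by auto
      define h where "h = gs!(j-1)"
      have h: "h \<in> carrier G" unfolding h_def using gsi jn by auto
      have "{x\<in>X. sig x ! j = i} = {x\<in>X. \<phi> h x \<in> Es!i}"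
        using sig_nth[OF jn(1)] idx_eq[OF yvX[OF _ jn(1)]] i jn unfolding yv_def h_def m_def by auto
      also have "\<dots> = \<phi> (inv\<^bsub>G\<^esub> h) ` (Es!i)"
      proof
        show "{x\<in>X. \<phi> h x \<in> Es!i} \<subseteq> \<phi> (inv\<^bsub>G\<^esub> h) ` (Es!i)"
        proof
          fix x assume "x \<in> {x\<in>X. \<phi> h x \<in> Es!i}"
          then have "x \<in> X" "\<phi> h x \<in> Es!i" by auto
          moreover have "\<phi> (inv\<^bsub>G\<^esub> h) (\<phi> h x) = x" using orbit_sym_aux[OF h \<open>x \<in> X\<close>] by simp
          ultimately show "x \<in> \<phi> (inv\<^bsub>G\<^esub> h) ` (Es!i)" by (metis image_eqI)
        qed
      next
        show "\<phi> (inv\<^bsub>G\<^esub> h) ` (Es!i) \<subseteq> {x\<in>X. \<phi> h x \<in> Es!i}"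
        proof
          fix x assume "x \<in> \<phi> (inv\<^bsub>G\<^esub> h) ` (Es!i)"
          then obtain z where z: "z \<in> Es!i" "x = \<phi> (inv\<^bsub>G\<^esub> h) z" by blast
          have zX: "z \<in> X" using z part i unfolding indexed_partition_def by auto
          have hi: "inv\<^bsub>G\<^esub> h \<in> carrier G" using h by simp
          have "x \<in> X" using z zX hi element_image by blast
          moreover have "\<phi> h x = z" using orbit_sym_aux[OF hi zX] z h by simp
          ultimately show "x \<in> {x\<in>X. \<phi> h x \<in> Es!i}" using z by simp
        qed
      qed
      finally have e1: "{x\<in>X. sig x ! j = i} = \<phi> (inv\<^bsub>G\<^esub> h) ` (Es!i)" .
      have EsX: "Es!i \<subseteq> X" using part i unfolding indexed_partition_def by auto
      have e2: "{x\<in>X. sig x ! 0 = i} = Es!i"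
        using sig_nth[of 0] idx_eq i EsX unfolding yv_def m_def by auto
      show "(\<Sum>C\<in>{C\<in>Cn. C ! j = i}. f C) = (\<Sum>C\<in>{C\<in>Cn. C ! 0 = i}. f C)"
        unfolding sumQ e1 e2 using minv EsX h by simp
    qed
  qed
qed


theorem mainTheorem1:
  fixes G :: "('g, 'b) monoid_scheme" and X :: "'x set" and \<phi> :: "'g \<Rightarrow> 'x \<Rightarrow> 'x"
  assumes "group_action G X \<phi>"
    and "finitely_generated_group G"
  shows "amenable_action G X \<phi> \<longleftrightarrow>
         (\<forall>gs Es. configuration_pair G X gs Es \<longrightarrow> has_normalized_solution \<phi> gs Es X)"
  using one_imp_two[OF assms(1)] two_imp_one[OF assms(1)] by blast

end
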